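(* If $\varphi\in\mathcal L_\Diamond$ and ${\sf ITL}^0_\Diamond\not\vdash\varphi$, then $\varphi$ is falsified on some finite $\mathrm{sub}(\varphi)$-quasimodel, i.e. there is a finite $\mathrm{sub}(\varphi)$-quasimodel $\mathcal Q$ and $w\in|\mathcal Q|$ with $\varphi\in\ell^-_{\mathcal Q}(w)$.
   Context: $\mathcal L_\Diamond$ is the propositional language with $\bot,\wedge,\vee,\to$ and unary modalities $\bigcirc$, $\Diamond$; $\mathrm{sub}(\varphi)$ is the set of subformulas of $\varphi$. ${\sf ITL}^0_\Diamond$ is the least set of formulas containing all intuitionistic propositional tautologies and $\neg\bigcirc\bot$, $\bigcirc\varphi\wedge\bigcirc\psi\to\bigcirc(\varphi\wedge\psi)$, $\bigcirc(\varphi\vee\psi)\to\bigcirc\varphi\vee\bigcirc\psi$, $\bigcirc(\varphi\to\psi)\to(\bigcirc\varphi\to\bigcirc\psi)$, $\varphi\vee\bigcirc\Diamond\varphi\to\Diamond\varphi$, closed under modus ponens and the rules $\varphi/\bigcirc\varphi$, $(\varphi\to\psi)/(\Diamond\varphi\to\Diamond\psi)$, $(\bigcirc\varphi\to\varphi)/(\Diamond\varphi\to\varphi)$. For $\Sigma$ closed under subformulas, a $\Sigma$-type is a pair $\Phi=(\Phi^-;\Phi^+)$ of subsets of $\Sigma$ with $\Phi^-\cap\Phi^+=\varnothing$, $\Phi^-\cup\Phi^+=\Sigma$, $\bot\notin\Phi^+$, for $\varphi\wedge\psi\in\Sigma$: $\varphi\wedge\psi\in\Phi^+$ iff $\varphi,\psi\in\Phi^+$;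 for $\varphi\vee\psi\in\Sigma$: $\varphi\vee\psi\in\Phi^+$ iff $\varphi\in\Phi^+$ or $\psi\in\Phi^+$; if $\varphi\to\psi\in\Phi^+$ then $\varphi\in\Phi^-$ or $\psi\in\Phi^+$; if $\Diamond\varphi\in\Phi^-$ then $\varphi\in\Phi^-$. $\Phi\preccurlyeq_T\Psi$ iff $\Phi^+\subseteq\Psi^+$. $\Phi\,S_T\,\Psi$ iff: $\bigcirc\varphi\in\Phi^+\Rightarrow\varphi\in\Psi^+$; $\bigcirc\varphi\in\Phi^-\Rightarrow\varphi\in\Psi^-$; ($\Diamond\varphi\in\Phi^+$, $\varphi\in\Phi^-$)$\Rightarrow\Diamond\varphi\in\Psi^+$; $\Diamond\varphi\in\Phi^-\Rightarrow\Diamond\varphi\in\Psi^-$. A $\Sigma$-quasimodel is $(W,\preccurlyeq,S,\ell)$ where $\preccurlyeq$ is a partial order on $W$, $\ell$ maps $W$ to $\Sigma$-types with $w\preccurlyeq v\Rightarrow\ell(w)\preccurlyeq_T\ell(v)$, and whenever $\varphi\to\psi\in\ell^-(w)$ there is $v\succcurlyeq w$ with $\varphi\in\ell^+(v)$, $\psi\in\ell^-(v)$; and $S\subseteq W\times W$ is serial, forward-confluent (if $w\preccurlyeq w'$ and $w\,S\,v$ then some $v'\succcurlyeq v$ has $w'\,S\,v'$), sensible ($w\,S\,v\Rightarrow\ell(w)\,S_T\,\ell(v)$), and $\omega$-sensible (if $\Diamond\varphi\in\ell^+(w)$ then there are $n\ge0$ and $v$ with $w\,S^n\,v$ and $\varphi\in\ell^+(v)$).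 *)

theory Defs
  imports Main
begin

datatype fml =
    Var nat
  | Bot
  | And fml fml
  | Or fml fml
  | Imp fml fml
  | Nxt fml
  | Dia fml

abbreviation Neg :: "fml \<Rightarrow> fml" where "Neg \<phi> \<equiv> Imp \<phi> Bot"

fun sub :: "fml \<Rightarrow> fml set" where
  "sub (Var p) = {Var p}"
| "sub Bot = {Bot}"
| "sub (And \<phi> \<psi>) = insert (And \<phi> \<psi>) (sub \<phi> \<union> sub \<psi>)"
| "sub (Or \<phi> \<psi>) = insert (Or \<phi> \<psi>) (sub \<phi> \<union> sub \<psi>)"
| "sub (Imp \<phi> \<psi>) = insert (Imp \<phi> \<psi>) (sub \<phi> \<union> sub \<psi>)"
| "sub (Nxt \<phi>) = insert (Nxt \<phi>) (sub \<phi>)"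
| "sub (Dia \<phi>) = insert (Dia \<phi>) (sub \<phi>)"

text \<open>Intuitionistic propositional tautologies (substitution instances in the full
language) are generated by the standard Hilbert axiom schemes of IPC together with
modus ponens.\<close>

inductive ITL0 :: "fml \<Rightarrow> bool" where
  ipc_K:    "ITL0 (Imp \<phi> (Imp \<psi> \<phi>))"
| ipc_S:    "ITL0 (Imp (Imp \<phi> (Imp \<psi> \<chi>)) (Imp (Imp \<phi> \<psi>) (Imp \<phi> \<chi>)))"
| ipc_and1: "ITL0 (Imp (And \<phi> \<psi>) \<phi>)"
| ipc_and2: "ITL0 (Imp (And \<phi> \<psi>) \<psi>)"
| ipc_andI: "ITL0 (Imp \<phi> (Imp \<psi> (And \<phi> \<psi>)))"
| ipc_or1:  "ITL0 (Imp \<phi> (Or \<phi> \<psi>))"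
| ipc_or2:  "ITL0 (Imp \<psi> (Or \<phi> \<psi>))"
| ipc_orE:  "ITL0 (Imp (Imp \<phi> \<chi>) (Imp (Imp \<psi> \<chi>) (Imp (Or \<phi> \<psi>) \<chi>)))"
| ipc_efq:  "ITL0 (Imp Bot \<phi>)"
| ax_nbot:  "ITL0 (Neg (Nxt Bot))"
| ax_nand:  "ITL0 (Imp (And (Nxt \<phi>) (Nxt \<psi>)) (Nxt (And \<phi> \<psi>)))"
| ax_nor:   "ITL0 (Imp (Nxt (Or \<phi> \<psi>)) (Or (Nxt \<phi>) (Nxt \<psi>)))"
| ax_nimp:  "ITL0 (Imp (Nxt (Imp \<phi> \<psi>)) (Imp (Nxt \<phi>) (Nxt \<psi>)))"
| ax_dia:   "ITL0 (Imp (Or \<phi> (Nxt (Dia \<phi>))) (Dia \<phi>))"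
| mp:       "ITL0 (Imp \<phi> \<psi>) \<Longrightarrow> ITL0 \<phi> \<Longrightarrow> ITL0 \<psi>"
| nec:      "ITL0 \<phi> \<Longrightarrow> ITL0 (Nxt \<phi>)"
| dia_mono: "ITL0 (Imp \<phi> \<psi>) \<Longrightarrow> ITL0 (Imp (Dia \<phi>) (Dia \<psi>))"
| dia_ind:  "ITL0 (Imp (Nxt \<phi>) \<phi>) \<Longrightarrow> ITL0 (Imp (Dia \<phi>) \<phi>)"

text \<open>A type is a pair (Phi^-, Phi^+): first component = Phi^-, second = Phi^+.\<close>

definition is_type :: "fml set \<Rightarrow> fml set \<times> fml set \<Rightarrow> bool" where
  "is_type \<Sigma> \<Phi> \<longleftrightarrow>
     (let Fm = fst \<Phi>; Fp = snd \<Phi> in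
       Fm \<inter> Fp = {} \<and> Fm \<union> Fp = \<Sigma> \<and> Bot \<notin> Fp \<and>
       (\<forall>\<phi> \<psi>. And \<phi> \<psi> \<in> \<Sigma> \<longrightarrow> (And \<phi> \<psi> \<in> Fp \<longleftrightarrow> \<phi> \<in> Fp \<and> \<psi> \<in> Fp)) \<and>
       (\<forall>\<phi> \<psi>. Or \<phi> \<psi> \<in> \<Sigma> \<longrightarrow> (Or \<phi> \<psi> \<in> Fp \<longleftrightarrow> \<phi> \<in> Fp \<or> \<psi> \<in> Fp)) \<and>
       (\<forall>\<phi> \<psi>. Imp \<phi> \<psi> \<in> Fp \<longrightarrow> \<phi> \<in> Fm \<or> \<psi> \<in> Fp) \<and>
       (\<forall>\<phi>. Dia \<phi> \<in> Fm \<longrightarrow> \<phi> \<in> Fm))"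

definition type_le :: "fml set \<times> fml set \<Rightarrow> fml set \<times> fml set \<Rightarrow> bool" where
  "type_le \<Phi> \<Psi> \<longleftrightarrow> snd \<Phi> \<subseteq> snd \<Psi>"

definition type_S :: "fml set \<times> fml set \<Rightarrow> fml set \<times> fml set \<Rightarrow> bool" where
  "type_S \<Phi> \<Psi> \<longleftrightarrow>
     (\<forall>\<phi>. Nxt \<phi> \<in> snd \<Phi> \<longrightarrow> \<phi> \<in> snd \<Psi>) \<and>
     (\<forall>\<phi>. Nxt \<phi> \<in> fst \<Phi> \<longrightarrow> \<phi> \<in> fst \<Psi>) \<and>
     (\<forall>\<phi>. Dia \<phi> \<in> snd \<Phi> \<and> \<phi> \<in> fst \<Phi> \<longrightarrow> Dia \<phi> \<in> snd \<Psi>) \<and>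
     (\<forall>\<phi>. Dia \<phi> \<in> fst \<Phi> \<longrightarrow> Dia \<phi> \<in> fst \<Psi>)"

definition quasimodel ::
  "fml set \<Rightarrow> 'w set \<Rightarrow> ('w \<Rightarrow> 'w \<Rightarrow> bool) \<Rightarrow> ('w \<Rightarrow> 'w \<Rightarrow> bool)
     \<Rightarrow> ('w \<Rightarrow> fml set \<times> fml set) \<Rightarrow> bool" where
  "quasimodel \<Sigma> W le S lab \<longleftrightarrow>
     \<comment> \<open>le is a partial order on W\<close>
     (\<forall>w v. le w v \<longrightarrow> w \<in> W \<and> v \<in> W) \<and>
     (\<forall>w\<in>W. le w w) \<and>
     (\<forall>u\<in>W. \<forall>v\<in>W. \<forall>w\<in>W. le u v \<and> le v w \<longrightarrow> le u w) \<and>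
     (\<forall>u\<in>W. \<forall>v\<in>W. le u v \<and> le v u \<longrightarrow> u = v) \<and>
     \<comment> \<open>labels are types, monotone along le\<close>
     (\<forall>w\<in>W. is_type \<Sigma> (lab w)) \<and>
     (\<forall>w v. le w v \<longrightarrow> type_le (lab w) (lab v)) \<and>
     (\<forall>w\<in>W. \<forall>\<phi> \<psi>. Imp \<phi> \<psi> \<in> fst (lab w) \<longrightarrow>
        (\<exists>v. le w v \<and> \<phi> \<in> snd (lab v) \<and> \<psi> \<in> fst (lab v))) \<and>
     \<comment> \<open>S is a relation on W\<close>
     (\<forall>w v. S w v \<longrightarrow> w \<in> W \<and> v \<in> W) \<and>
     \<comment> \<open>serial\<close>
     (\<forall>w\<in>W. \<exists>v. S w v) \<and>
     \<comment> \<open>forward-confluent\<close>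
     (\<forall>w w' v. le w w' \<and> S w v \<longrightarrow> (\<exists>v'. le v v' \<and> S w' v')) \<and>
     \<comment> \<open>sensible\<close>
     (\<forall>w v. S w v \<longrightarrow> type_S (lab w) (lab v)) \<and>
     \<comment> \<open>omega-sensible\<close>
     (\<forall>w\<in>W. \<forall>\<phi>. Dia \<phi> \<in> snd (lab w) \<longrightarrow>
        (\<exists>n v. (S ^^ n) w v \<and> \<phi> \<in> snd (lab v)))"

end

theory Submission
  imports Defs
begin


inductive nd :: "fml set \<Rightarrow> fml \<Rightarrow> bool" where
  nd_hyp: "a \<in> G \<Longrightarrow> nd G a"
| nd_thm: "ITL0 a \<Longrightarrow> nd G a"
| nd_mp: "nd G (Imp a b) \<Longrightarrow> nd G a \<Longrightarrow> nd G b"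

lemma ITL0_id: "ITL0 (Imp a a)"
proof -
  have 1: "ITL0 (Imp (Imp a (Imp (Imp a a) a)) (Imp (Imp a (Imp a a)) (Imp a a)))" by (rule ipc_S)
  have 2: "ITL0 (Imp a (Imp (Imp a a) a))" by (rule ipc_K)
  have 3: "ITL0 (Imp a (Imp a a))" by (rule ipc_K)
  show ?thesis using mp[OF mp[OF 1 2] 3] .
qed

lemma nd_mono: "nd G a \<Longrightarrow> G \<subseteq> H \<Longrightarrow> nd H a"
  by (induction rule: nd.induct) (auto intro: nd.intros)

lemma nd_deduct: "nd (insert a G) b \<Longrightarrow> nd G (Imp a b)"
proof (induction "insert a G" b rule: nd.induct)
  case (nd_hyp b)
  then show ?case
  proof
    assume "b = a" then show ?thesis using ITL0_id nd_thm by auto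
  next
    assume "b \<in> G" then show ?thesis using nd.nd_mp[OF nd.nd_thm[OF ipc_K] nd.nd_hyp] by blast
  qed
next
  case (nd_thm b)
  then show ?case by (meson ipc_K mp nd.nd_thm)
next
  case (nd_mp b c)
  then show ?case by (meson ipc_S nd.nd_mp nd.nd_thm)
qed

lemma nd_empty: "nd {} a \<Longrightarrow> ITL0 a"
  by (induction "{}::fml set" a rule: nd.induct) (auto intro: mp)

lemma nd_finite: "nd G a \<Longrightarrow> \<exists>F. finite F \<and> F \<subseteq> G \<and> nd F a"
proof (induction rule: nd.induct)
  case (nd_hyp a G) then show ?case by (intro exI[of _ "{a}"]) (auto intro: nd.intros)
next
  case (nd_thm a G) then show ?case by (intro exI[of _ "{}"]) (auto intro: nd.intros)
next
  case (nd_mp G a b)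
  then obtain F1 F2 where "finite F1" "F1 \<subseteq> G" "nd F1 (Imp a b)" "finite F2" "F2 \<subseteq> G" "nd F2 a" by blast
  then show ?case
    by (intro exI[of _ "F1 \<union> F2"]) (auto intro: nd.nd_mp nd_mono)
qed

definition prime :: "fml set \<Rightarrow> bool" where
  "prime D \<longleftrightarrow> (\<forall>a. nd D a \<longrightarrow> a \<in> D) \<and> Bot \<notin> D \<and> (\<forall>a b. Or a b \<in> D \<longrightarrow> a \<in> D \<or> b \<in> D)"

lemma lindenbaum:
  assumes "\<not> nd G c"
  shows "\<exists>D. prime D \<and> G \<subseteq> D \<and> c \<notin> D"
proof -
  let ?A = "{D. G \<subseteq> D \<and> \<not> nd D c}"
  have "\<forall>C\<in>chains ?A. \<exists>U\<in>?A. \<forall>X\<in>C. X \<subseteq> U"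
  proof
    fix C assume C: "C \<in> chains ?A"
    show "\<exists>U\<in>?A. \<forall>X\<in>C. X \<subseteq> U"
    proof (cases "C = {}")
      case True then show ?thesis using assms by auto
    next
      case False
      have "\<not> nd (\<Union>C) c"
      proof
        assume "nd (\<Union>C) c"
        then obtain F where F: "finite F" "F \<subseteq> \<Union>C" "nd F c" using nd_finite by blast
        have ch: "subset.chain ?A C" using C by (simp add: chains_alt_def)
        obtain B where "B \<in> C" "F \<subseteq> B" using finite_subset_Union_chain[OF F(1) F(2) False ch] by blast
        then show False using F(3) nd_mono C by (auto simp: chains_def)
      qed
      moreover have "G \<subseteq> \<Union>C" using False C by (auto simp: chains_def)
      ultimately show ?thesis by auto
    qed
  qed
  then obtain M where M: "M \<in> ?A" and max: "\<forall>X\<in>?A. M \<subseteq> X \<longrightarrow> X = M"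
    using Zorn_Lemma2[of ?A] by blast
  have ins: "a \<notin> M \<Longrightarrow> nd M (Imp a c)" for a
  proof -
    assume "a \<notin> M"
    then have "insert a M \<notin> ?A" using max by blast
    then have "nd (insert a M) c" using M by auto
    then show ?thesis by (rule nd_deduct)
  qed
  have cl: "nd M a \<Longrightarrow> a \<in> M" for a
    using ins M nd_mp by blast
  have "Bot \<notin> M" using M nd_mp[OF nd_thm[OF ipc_efq] nd_hyp] by blast
  moreover have "Or a b \<in> M \<Longrightarrow> a \<in> M \<or> b \<in> M" for a b
  proof (rule ccontr)
    assume "Or a b \<in> M" "\<not> (a \<in> M \<or> b \<in> M)"
    then have "nd M c" using ins nd_mp[OF nd_mp[OF nd_mp[OF nd_thm[OF ipc_orE]]]] nd_hyp by metis
    then show False using M by auto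
  qed
  moreover have "c \<notin> M" using M nd_hyp by blast
  ultimately show ?thesis using cl M unfolding prime_def by blast
qed


lemma prime_nd: "prime D \<Longrightarrow> nd D a \<Longrightarrow> a \<in> D" unfolding prime_def by blast
lemma prime_thm: "prime D \<Longrightarrow> ITL0 a \<Longrightarrow> a \<in> D" using prime_nd nd_thm by blast
lemma prime_mp: "prime D \<Longrightarrow> Imp a b \<in> D \<Longrightarrow> a \<in> D \<Longrightarrow> b \<in> D"
  using prime_nd nd_mp nd_hyp by metis
lemma prime_ax: "prime D \<Longrightarrow> ITL0 (Imp a b) \<Longrightarrow> a \<in> D \<Longrightarrow> b \<in> D"
  using prime_mp prime_thm by blast
lemma prime_bot: "prime D \<Longrightarrow> Bot \<notin> D" unfolding prime_def by blast
lemma prime_or: "prime D \<Longrightarrow> Or a b \<in> D \<longleftrightarrow> a \<in> D \<or> b \<in> D"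
  unfolding prime_def using prime_ax[OF _ ipc_or1] prime_ax[OF _ ipc_or2] prime_def by blast
lemma prime_and: "prime D \<Longrightarrow> And a b \<in> D \<longleftrightarrow> a \<in> D \<and> b \<in> D"
  using prime_ax[OF _ ipc_and1] prime_ax[OF _ ipc_and2] prime_mp[OF _ prime_ax[OF _ ipc_andI]] by blast

lemma prime_imp_ext:
  assumes "prime D" "Imp a b \<notin> D"
  shows "\<exists>D'. prime D' \<and> D \<subseteq> D' \<and> a \<in> D' \<and> b \<notin> D'"
proof -
  have "\<not> nd (insert a D) b"
    using assms nd_deduct prime_nd by blast
  then show ?thesis using lindenbaum by blast
qed

lemma prime_imp: "prime D \<Longrightarrow> Imp a b \<in> D \<longleftrightarrow> (\<forall>D'. prime D' \<longrightarrow> D \<subseteq> D' \<longrightarrow> a \<in> D' \<longrightarrow> b \<in> D')"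
  using prime_imp_ext prime_mp by blast

lemma thm_complete: "(\<And>D. prime D \<Longrightarrow> a \<in> D) \<Longrightarrow> ITL0 a"
  using lindenbaum[of "{}" a] nd_empty by blast

lemma thm_complete_imp: "(\<And>D. prime D \<Longrightarrow> a \<in> D \<Longrightarrow> b \<in> D) \<Longrightarrow> ITL0 (Imp a b)"
  by (rule thm_complete) (meson prime_imp)

definition Top :: fml where "Top = Imp Bot Bot"
lemma prime_top: "prime D \<Longrightarrow> Top \<in> D" unfolding Top_def using prime_thm ipc_efq by blast

fun conj :: "fml list \<Rightarrow> fml" where
  "conj [] = Top" | "conj (x # xs) = And x (conj xs)"
fun disj :: "fml list \<Rightarrow> fml" where
  "disj [] = Bot" | "disj (x # xs) = Or x (disj xs)"

lemma prime_conj: "prime D \<Longrightarrow> conj xs \<in> D \<longleftrightarrow> set xs \<subseteq> D"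
  by (induction xs) (auto simp: prime_and prime_top)
lemma prime_disj: "prime D \<Longrightarrow> disj xs \<in> D \<longleftrightarrow> (\<exists>x\<in>set xs. x \<in> D)"
  by (induction xs) (auto simp: prime_or prime_bot)

lemma prime_ext_iff:
  "prime D \<Longrightarrow> Imp (conj A) (disj B) \<notin> D \<longleftrightarrow>
     (\<exists>D'. prime D' \<and> D \<subseteq> D' \<and> set A \<subseteq> D' \<and> set B \<inter> D' = {})"
  by (auto simp: prime_imp prime_conj prime_disj)

definition snx :: "fml set \<Rightarrow> fml set" where "snx D = {a. Nxt a \<in> D}"

lemma snx_prime: assumes "prime D" shows "prime (snx D)"
proof -
  have "nd (snx D) a \<Longrightarrow> Nxt a \<in> D" for a
  proof (induction "snx D" a rule: nd.induct)
    case (nd_hyp a) then show ?case by (simp add: snx_def)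
  next
    case (nd_thm a) then show ?case using assms prime_thm nec by blast
  next
    case (nd_mp a b) then show ?case using assms prime_ax[OF _ ax_nimp] prime_mp by blast
  qed
  moreover have "Bot \<notin> snx D" using assms prime_ax[OF _ ax_nbot] prime_bot by (auto simp: snx_def)
  moreover have "Or a b \<in> snx D \<Longrightarrow> a \<in> snx D \<or> b \<in> snx D" for a b
    using assms prime_ax[OF _ ax_nor] prime_or by (auto simp: snx_def)
  ultimately show ?thesis unfolding prime_def snx_def by auto
qed

lemma snx_mono: "D \<subseteq> D' \<Longrightarrow> snx D \<subseteq> snx D'" unfolding snx_def by auto

lemma dia_intro: "prime D \<Longrightarrow> a \<in> D \<Longrightarrow> Dia a \<in> D"
  using prime_ax[OF _ ax_dia] prime_or by blast
lemma dia_intro2: "prime D \<Longrightarrow> Nxt (Dia a) \<in> D \<Longrightarrow> Dia a \<in> D"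
  using prime_ax[OF _ ax_dia] prime_or by blast

lemma dia_unfold: "ITL0 (Imp (Dia a) (Or a (Nxt (Dia a))))"
proof -
  let ?p = "Or a (Nxt (Dia a))"
  have "ITL0 (Imp (Nxt ?p) ?p)"
  proof (rule thm_complete_imp)
    fix D assume D: "prime D" "Nxt ?p \<in> D"
    then have s: "prime (snx D)" "?p \<in> snx D" using snx_prime by (auto simp: snx_def)
    then have "Dia a \<in> snx D" using dia_intro dia_intro2 prime_or[OF s(1)] by (metis dia_intro snx_def mem_Collect_eq)
    then show "?p \<in> D" using D prime_or by (auto simp: snx_def)
  qed
  then have 1: "ITL0 (Imp (Dia ?p) ?p)" by (rule dia_ind)
  have 2: "ITL0 (Imp (Dia a) (Dia ?p))" by (rule dia_mono[OF ipc_or1])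
  show ?thesis
    by (rule thm_complete_imp) (use 1 2 prime_ax in blast)
qed

lemma sub_refl: "a \<in> sub a" by (cases a) auto
lemma sub_trans: "b \<in> sub a \<Longrightarrow> sub b \<subseteq> sub a"
  by (induction a) (auto intro: sub_refl)
lemma finite_sub: "finite (sub a)" by (induction a) auto


datatype mom = Mom (lab: "fml set \<times> fml set") (ch: "mom list")

definition lst :: "'a set \<Rightarrow> 'a list" where "lst A = (SOME xs. set xs = A)"
lemma set_lst: "finite A \<Longrightarrow> set (lst A) = A"
proof -
  assume "finite A"
  then obtain xs where "set xs = A" using finite_list by blast
  then show ?thesis unfolding lst_def by (rule someI)
qed

inductive insub :: "mom \<Rightarrow> mom \<Rightarrow> bool" where
  insub_refl: "insub w w"
| insub_step: "c \<in> set (ch w) \<Longrightarrow> insub c v \<Longrightarrow> insub w v"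

lemma insub_trans: "insub a b \<Longrightarrow> insub b c \<Longrightarrow> insub a c"
  by (induction rule: insub.induct) (auto intro: insub.intros)

inductive le_m :: "mom \<Rightarrow> mom \<Rightarrow> bool" where
  "insub w w' \<Longrightarrow> lab w' = lab b \<Longrightarrow> (\<forall>c\<in>set (ch b). le_m w' c) \<Longrightarrow> le_m w b"

lemma le_m_iff: "le_m w b \<longleftrightarrow> (\<exists>w'. insub w w' \<and> lab w' = lab b \<and> (\<forall>c\<in>set (ch b). le_m w' c))"
  by (subst le_m.simps) auto

lemma le_m_mono: "le_m w2 b \<Longrightarrow> (\<And>x. insub w2 x \<Longrightarrow> insub w1 x) \<Longrightarrow> le_m w1 b"
proof -
  assume a: "le_m w2 b" and s: "\<And>x. insub w2 x \<Longrightarrow> insub w1 x"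
  from a obtain w' where "insub w2 w'" "lab w' = lab b" "\<forall>c\<in>set (ch b). le_m w' c"
    unfolding le_m_iff[of w2 b] by blast
  then show ?thesis unfolding le_m_iff[of w1 b] using s by blast
qed

lemma insub_le_m: "insub w c \<Longrightarrow> le_m w c"
proof (induction c arbitrary: w)
  case (Mom L cs)
  have "\<forall>x\<in>set cs. le_m (Mom L cs) x"
  proof
    fix x assume x: "x \<in> set cs"
    have "insub (Mom L cs) x" using insub_step[of x "Mom L cs" x] x insub_refl by simp
    then show "le_m (Mom L cs) x" using Mom.IH x by blast
  qed
  then show ?case unfolding le_m_iff[of w "Mom L cs"]
    using Mom.prems by (intro exI[of _ "Mom L cs"]) auto
qed

lemma le_m_refl: "le_m w w" by (rule insub_le_m) (rule insub_refl)

lemma le_m_tight: "le_m a b \<Longrightarrow> \<exists>a'. insub a a' \<and> lab a' = lab b \<and> le_m a' b"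
proof -
  assume "le_m a b"
  then obtain a' where a': "insub a a'" "lab a' = lab b" "\<forall>c\<in>set (ch b). le_m a' c"
    unfolding le_m_iff[of a b] by blast
  then have "le_m a' b" unfolding le_m_iff[of a' b] using insub_refl by blast
  then show ?thesis using a' by blast
qed

lemma le_m_down: "insub b b' \<Longrightarrow> le_m a b \<Longrightarrow> \<exists>a'. insub a a' \<and> le_m a' b'"
proof (induction b b' arbitrary: a rule: insub.induct)
  case (insub_refl w) then show ?case by (auto intro: insub.intros)
next
  case (insub_step c w v)
  then obtain a1 where "insub a a1" "\<forall>c\<in>set (ch w). le_m a1 c" by (auto simp: le_m_iff[of a w])
  then have "le_m a1 c" using insub_step by blast
  then obtain a2 where "insub a1 a2" "le_m a2 v" using insub_step by blast
  then show ?case using \<open>insub a a1\<close> insub_trans by blast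
qed

lemma le_m_trans: "le_m a b \<Longrightarrow> le_m b c \<Longrightarrow> le_m a c"
proof (induction c arbitrary: a b)
  case (Mom L cs)
  obtain b' where b': "insub b b'" "lab b' = L" "\<forall>c'\<in>set cs. le_m b' c'"
    using Mom.prems(2) by (auto simp: le_m_iff[of b "Mom L cs"])
  obtain a' where a': "insub a a'" "le_m a' b'" using le_m_down[OF b'(1) Mom.prems(1)] by blast
  obtain a'' where a'': "insub a' a''" "lab a'' = lab b'" "le_m a'' b'" using le_m_tight[OF a'(2)] by blast
  have "\<forall>c'\<in>set cs. le_m a'' c'" using Mom.IH a''(3) b'(3) by auto
  moreover have "insub a a''" using a' a'' insub_trans by blast
  ultimately show ?case unfolding le_m_iff[of a "Mom L cs"] using a'' b' by auto
qed

fun beta :: "mom \<Rightarrow> fml" where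
  "beta (Mom L cs) = Imp (conj (lst (snd L))) (disj (lst (fst L) @ map beta cs))"

inductive Sk :: "mom set \<Rightarrow> mom \<Rightarrow> mom \<Rightarrow> bool" for K where
  "type_S (lab a) (lab b) \<Longrightarrow> (\<forall>c\<in>set (ch a). \<exists>d\<in>K. le_m b d \<and> Sk K c d) \<Longrightarrow> Sk K a b"

lemma Sk_iff: "Sk K a b \<longleftrightarrow> type_S (lab a) (lab b) \<and> (\<forall>c\<in>set (ch a). \<exists>d\<in>K. le_m b d \<and> Sk K c d)"
  by (subst Sk.simps) auto


lemma Sk_sub: "insub a a1 \<Longrightarrow> Sk K a b \<Longrightarrow> b \<in> K \<Longrightarrow> \<exists>b1\<in>K. le_m b b1 \<and> Sk K a1 b1"
proof (induction a a1 arbitrary: b rule: insub.induct)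
  case (insub_refl w) then show ?case using le_m_refl by blast
next
  case (insub_step c w v)
  then obtain d where "d \<in> K" "le_m b d" "Sk K c d" using Sk_iff[of K w b] by auto
  moreover obtain b1 where "b1 \<in> K" "le_m d b1" "Sk K v b1" using insub_step.IH[OF \<open>Sk K c d\<close> \<open>d \<in> K\<close>] by blast
  ultimately show ?case using le_m_trans[of b d b1] by blast
qed

lemma Sk_confl: "le_m a a' \<Longrightarrow> Sk K a b \<Longrightarrow> b \<in> K \<Longrightarrow> \<exists>b1\<in>K. le_m b b1 \<and> Sk K a' b1"
proof (induction a' arbitrary: a b)
  case (Mom L cs)
  obtain a1 where a1: "insub a a1" "lab a1 = L" "\<forall>c\<in>set cs. le_m a1 c"
    using Mom.prems(1) by (auto simp: le_m_iff[of a "Mom L cs"])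
  obtain b1 where b1: "b1 \<in> K" "le_m b b1" "Sk K a1 b1" using Sk_sub[OF a1(1) Mom.prems(2,3)] by blast
  have "Sk K (Mom L cs) b1"
    unfolding Sk_iff[of K "Mom L cs"]
  proof
    show "type_S (lab (Mom L cs)) (lab b1)" using b1(3) a1(2) Sk_iff[of K a1 b1] by auto
    show "\<forall>c\<in>set (ch (Mom L cs)). \<exists>d\<in>K. le_m b1 d \<and> Sk K c d"
    proof
      fix c assume c: "c \<in> set (ch (Mom L cs))"
      then have "le_m a1 c" using a1(3) by simp
      then show "\<exists>d\<in>K. le_m b1 d \<and> Sk K c d" using Mom.IH[of c a1 b1] c b1 by simp
    qed
  qed
  then show ?case using b1 by blast
qed

locale qm =
  fixes SG :: "fml set"
  assumes fin: "finite SG"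
    and cl_and: "And a b \<in> SG \<Longrightarrow> a \<in> SG \<and> b \<in> SG"
    and cl_or: "Or a b \<in> SG \<Longrightarrow> a \<in> SG \<and> b \<in> SG"
    and cl_imp: "Imp a b \<in> SG \<Longrightarrow> a \<in> SG \<and> b \<in> SG"
    and cl_nxt: "Nxt a \<in> SG \<Longrightarrow> a \<in> SG"
    and cl_dia: "Dia a \<in> SG \<Longrightarrow> a \<in> SG"
begin

definition tp :: "fml set \<Rightarrow> fml set \<times> fml set" where "tp D = (SG - D, SG \<inter> D)"
definition ext :: "fml set \<Rightarrow> fml set set" where
  "ext D = {D'. prime D' \<and> D \<subseteq> D' \<and> tp D' \<noteq> tp D}"
definition mu :: "fml set \<Rightarrow> nat" where "mu D = card (SG - D)"

primrec mn :: "nat \<Rightarrow> fml set \<Rightarrow> mom" where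
  "mn 0 D = Mom (tp D) []"
| "mn (Suc n) D = Mom (tp D) (lst (mn n ` ext D))"

lemma finite_range_mn: "finite (range (mn n))"
proof (induction n)
  case 0
  have "range (mn 0) \<subseteq> (\<lambda>T. Mom T []) ` (Pow SG \<times> Pow SG)" by (auto simp: tp_def)
  then show ?case using fin finite_subset by blast
next
  case (Suc n)
  have "range (mn (Suc n)) \<subseteq> (\<lambda>(T,A). Mom T (lst A)) ` ((Pow SG \<times> Pow SG) \<times> Pow (range (mn n)))"
  proof
    fix x assume "x \<in> range (mn (Suc n))"
    then obtain D where D: "x = mn (Suc n) D" by blast
    have "(tp D, mn n ` ext D) \<in> (Pow SG \<times> Pow SG) \<times> Pow (range (mn n))" by (auto simp: tp_def)
    then show "x \<in> (\<lambda>(T,A). Mom T (lst A)) ` ((Pow SG \<times> Pow SG) \<times> Pow (range (mn n)))"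
      using D by (auto intro!: image_eqI[where x="(tp D, mn n ` ext D)"])
  qed
  moreover have "finite ((Pow SG \<times> Pow SG) \<times> Pow (range (mn n)))" using fin Suc by simp
  ultimately show ?case using finite_subset by blast
qed

lemma mu_ext: "D' \<in> ext D \<Longrightarrow> mu D' < mu D"
proof -
  assume "D' \<in> ext D"
  then have "D \<subseteq> D'" "tp D' \<noteq> tp D" by (auto simp: ext_def)
  then have "SG - D' \<subset> SG - D" by (auto simp: tp_def)
  then show ?thesis unfolding mu_def using fin by (meson finite_Diff psubset_card_mono)
qed

lemma mu_le: "mu D \<le> card SG" unfolding mu_def using fin by (simp add: card_mono)

lemma mn_stab: "mu D \<le> n \<Longrightarrow> mn (Suc n) D = mn n D"
proof (induction n arbitrary: D)
  case 0
  then have "ext D = {}" using mu_ext by fastforce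
  have "lst ({}::mom set) = []" using set_lst[of "{}::mom set"] by simp
  then show ?case using \<open>ext D = {}\<close> by simp
next
  case (Suc n)
  have "mn (Suc n) ` ext D = mn n ` ext D"
  proof (rule image_cong[OF refl])
    fix D' assume "D' \<in> ext D"
    then have "mu D' \<le> n" using mu_ext[of D' D] Suc.prems by linarith
    then show "mn (Suc n) D' = mn n D'" by (rule Suc.IH)
  qed
  then show ?case by (simp only: mn.simps)
qed

lemma mn_stab2: "mu D \<le> n \<Longrightarrow> mn n D = mn (mu D) D"
proof (induction n rule: dec_induct)
  case base then show ?case by simp
next
  case (step k)
  then have "mn (Suc k) D = mn k D" using mn_stab[of D k] by blast
  then show ?case using step.IH by (rule trans)
qed

definition m :: "fml set \<Rightarrow> mom" where "m D = mn (Suc (card SG)) D"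

lemma lab_m: "lab (m D) = tp D" unfolding m_def by (simp only: mn.simps mom.sel)

lemma ch_m: "set (ch (m D)) = m ` ext D"
proof -
  have fe: "finite (mn (card SG) ` ext D)"
    by (rule finite_subset[OF _ finite_range_mn[of "card SG"]]) blast
  have "mn (card SG) ` ext D = m ` ext D"
  proof (intro image_cong refl)
    fix D' assume "D' \<in> ext D"
    then have "mu D' \<le> card SG" using mu_le by blast
    then have "mn (card SG) D' = mn (mu D') D'" "mn (Suc (card SG)) D' = mn (mu D') D'"
      using mn_stab2 le_SucI by blast+
    then show "mn (card SG) D' = m D'" unfolding m_def by (rule trans[OF _ sym])
  qed
  have "set (ch (m D)) = mn (card SG) ` ext D" unfolding m_def
    using set_lst[OF fe] by (simp only: mn.simps mom.sel)
  then show ?thesis using \<open>mn (card SG) ` ext D = m ` ext D\<close> by simp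
qed

definition K :: "mom set" where "K = m ` {D. prime D}"

lemma finite_K: "finite K"
proof -
  have "K \<subseteq> range (mn (Suc (card SG)))" by (auto simp: K_def m_def)
  then show ?thesis by (rule finite_subset[OF _ finite_range_mn])
qed

lemma insub_m0: "insub x w \<Longrightarrow> x = m D \<Longrightarrow> \<exists>D'. (prime D \<longrightarrow> prime D') \<and> D \<subseteq> D' \<and> w = m D'"
proof (induction x w arbitrary: D rule: insub.induct)
  case (insub_refl w) then show ?case by blast
next
  case (insub_step c w v)
  then obtain D1 where D1: "D1 \<in> ext D" "c = m D1" using ch_m by auto
  then obtain D2 where "prime D1 \<longrightarrow> prime D2" "D1 \<subseteq> D2" "v = m D2" using insub_step.IH by blast
  then show ?case using D1 by (auto simp: ext_def)
qed

lemma insub_m: "insub (m D) w \<Longrightarrow> \<exists>D'. (prime D \<longrightarrow> prime D') \<and> D \<subseteq> D' \<and> w = m D'"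
  using insub_m0 by blast

lemma insub_K: "w \<in> K \<Longrightarrow> insub w v \<Longrightarrow> v \<in> K \<and> snd (lab w) \<subseteq> snd (lab v)"
proof -
  assume "w \<in> K" "insub w v"
  then obtain D where D: "prime D" "w = m D" by (auto simp: K_def)
  then obtain D' where "prime D'" "D \<subseteq> D'" "v = m D'" using insub_m \<open>insub w v\<close> by blast
  then show ?thesis using D by (auto simp: K_def lab_m tp_def)
qed

lemma le_m_K_lab: "a \<in> K \<Longrightarrow> le_m a b \<Longrightarrow> snd (lab a) \<subseteq> snd (lab b)"
proof -
  assume "a \<in> K" "le_m a b"
  then obtain a' where "insub a a'" "lab a' = lab b" using le_m_tight by blast
  then show ?thesis using insub_K \<open>a \<in> K\<close> by metis
qed

lemma lab_K_eq: "a \<in> K \<Longrightarrow> b \<in> K \<Longrightarrow> snd (lab a) = snd (lab b) \<Longrightarrow> lab a = lab b"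
  unfolding K_def by (auto simp: lab_m tp_def)

end


lemma insub_neq: "insub w x \<Longrightarrow> x \<noteq> w \<Longrightarrow> \<exists>c\<in>set (ch w). insub c x"
  by (cases rule: insub.cases) auto

context qm begin

lemma ext_mono: "D \<subseteq> D' \<Longrightarrow> tp D = tp D' \<Longrightarrow> ext D' \<subseteq> ext D"
  unfolding ext_def by auto

lemma le_m_m: assumes "prime D'" "D \<subseteq> D'" shows "le_m (m D) (m D')"
proof (cases "tp D' = tp D")
  case True
  have "set (ch (m D')) \<subseteq> set (ch (m D))" using ext_mono[OF assms(2) True[symmetric]] by (simp add: ch_m image_mono)
  then show ?thesis unfolding le_m_iff[of "m D"]
    using True by (intro exI[of _ "m D"]) (auto simp: lab_m intro: insub_refl insub_le_m insub_step)
next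
  case False
  then have "m D' \<in> set (ch (m D))" using assms by (auto simp: ch_m ext_def)
  then show ?thesis by (meson insub_le_m insub_refl insub_step)
qed

lemma K_ch: "b \<in> K \<Longrightarrow> c \<in> set (ch b) \<Longrightarrow> c \<in> K \<and> lab c \<noteq> lab b"
  unfolding K_def by (auto simp: ch_m ext_def lab_m)

lemma truth: "b \<in> K \<Longrightarrow> prime D \<Longrightarrow> le_m (m D) b \<longleftrightarrow> beta b \<notin> D"
proof (induction b arbitrary: D)
  case (Mom L cs)
  obtain D0 where D0: "prime D0" "Mom L cs = m D0" using Mom.prems(1) unfolding K_def by blast
  have L: "L = tp D0" using lab_m[of D0] D0(2) mom.sel(1)[of L cs] by argo
  have fs: "finite (fst L)" "finite (snd L)" using fin unfolding L tp_def by simp_all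
  have ch: "c \<in> set cs \<Longrightarrow> c \<in> K \<and> lab c \<noteq> L" for c using K_ch[OF Mom.prems(1), of c] by simp
  have ih: "c \<in> set cs \<Longrightarrow> prime D' \<Longrightarrow> le_m (m D') c \<longleftrightarrow> beta c \<notin> D'" for c D'
    using Mom.IH[of c D'] ch[of c] by blast
  have tpL: "tp D' = L \<longleftrightarrow> snd L \<subseteq> D' \<and> fst L \<inter> D' = {}" for D'
    unfolding L tp_def by auto
  have "beta (Mom L cs) \<notin> D \<longleftrightarrow>
     (\<exists>D'. prime D' \<and> D \<subseteq> D' \<and> set (lst (snd L)) \<subseteq> D' \<and> set (lst (fst L) @ map beta cs) \<inter> D' = {})"
    using prime_ext_iff[OF Mom.prems(2)] by (simp only: beta.simps)
  also have "\<dots> \<longleftrightarrow> (\<exists>D'. prime D' \<and> D \<subseteq> D' \<and> snd L \<subseteq> D' \<and> (fst L \<union> beta ` set cs) \<inter> D' = {})"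
    using set_lst[OF fs(1)] set_lst[OF fs(2)] by simp
  also have "\<dots> \<longleftrightarrow> (\<exists>D'. prime D' \<and> D \<subseteq> D' \<and> tp D' = L \<and> (\<forall>c\<in>set cs. beta c \<notin> D'))"
    unfolding tpL by blast
  finally have eq1: "beta (Mom L cs) \<notin> D \<longleftrightarrow> (\<exists>D'. prime D' \<and> D \<subseteq> D' \<and> tp D' = L \<and> (\<forall>c\<in>set cs. beta c \<notin> D'))" .
  have eq2: "(\<exists>D'. prime D' \<and> D \<subseteq> D' \<and> tp D' = L \<and> (\<forall>c\<in>set cs. beta c \<notin> D'))
     \<longleftrightarrow> (\<exists>D'. prime D' \<and> D \<subseteq> D' \<and> tp D' = L \<and> (\<forall>c\<in>set cs. le_m (m D') c))"
  proof
    assume "\<exists>D'. prime D' \<and> D \<subseteq> D' \<and> tp D' = L \<and> (\<forall>c\<in>set cs. beta c \<notin> D')"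
    then obtain D' where "prime D'" "D \<subseteq> D'" "tp D' = L" "\<forall>c\<in>set cs. beta c \<notin> D'" by blast
    moreover have "\<forall>c\<in>set cs. le_m (m D') c" using calculation ih by blast
    ultimately show "\<exists>D'. prime D' \<and> D \<subseteq> D' \<and> tp D' = L \<and> (\<forall>c\<in>set cs. le_m (m D') c)" by blast
  next
    assume "\<exists>D'. prime D' \<and> D \<subseteq> D' \<and> tp D' = L \<and> (\<forall>c\<in>set cs. le_m (m D') c)"
    then obtain D' where "prime D'" "D \<subseteq> D'" "tp D' = L" "\<forall>c\<in>set cs. le_m (m D') c" by blast
    moreover have "\<forall>c\<in>set cs. beta c \<notin> D'" using calculation ih by blast
    ultimately show "\<exists>D'. prime D' \<and> D \<subseteq> D' \<and> tp D' = L \<and> (\<forall>c\<in>set cs. beta c \<notin> D')" by blast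
  qed
  have eq3: "(\<exists>D'. prime D' \<and> D \<subseteq> D' \<and> tp D' = L \<and> (\<forall>c\<in>set cs. le_m (m D') c)) \<longleftrightarrow> le_m (m D) (Mom L cs)"
  proof
    assume "\<exists>D'. prime D' \<and> D \<subseteq> D' \<and> tp D' = L \<and> (\<forall>c\<in>set cs. le_m (m D') c)"
    then obtain D' where D': "prime D'" "D \<subseteq> D'" "tp D' = L" "\<forall>c\<in>set cs. le_m (m D') c" by blast
    show "le_m (m D) (Mom L cs)"
    proof (cases "tp D' = tp D")
      case False
      then have "D' \<in> ext D" using D' unfolding ext_def by blast
      then have "m D' \<in> set (ch (m D))" unfolding ch_m by blast
      then have "insub (m D) (m D')" using insub_step insub_refl by blast
      moreover have "lab (m D') = lab (Mom L cs)" using D'(3) lab_m by simp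
      ultimately show ?thesis unfolding le_m_iff[of "m D" "Mom L cs"] using D'(4) by auto
    next
      case True
      have "le_m (m D) c" if cin: "c \<in> set cs" for c
      proof -
        have "le_m (m D') c" using D'(4) cin by blast
        then obtain w where w: "insub (m D') w" "lab w = lab c" "\<forall>c'\<in>set (ch c). le_m w c'"
          unfolding le_m_iff[of "m D'" c] by blast
        have "w \<noteq> m D'" using w(2) ch[OF cin] D'(3) lab_m by metis
        then obtain c1 where c1: "c1 \<in> set (ch (m D'))" "insub c1 w" using insub_neq w(1) by blast
        have "ext D' \<subseteq> ext D" using ext_mono[OF D'(2) True[symmetric]] .
        then have "c1 \<in> set (ch (m D))" using c1(1) unfolding ch_m by blast
        then have "insub (m D) w" using c1(2) by (rule insub_step)
        then show ?thesis unfolding le_m_iff[of "m D" c] using w by blast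
      qed
      moreover have "lab (m D) = lab (Mom L cs)" using True D'(3) lab_m by simp
      ultimately show ?thesis unfolding le_m_iff[of "m D" "Mom L cs"] using insub_refl by auto
    qed
  next
    assume "le_m (m D) (Mom L cs)"
    then obtain w where w: "insub (m D) w" "lab w = L" "\<forall>c\<in>set cs. le_m w c"
      unfolding le_m_iff[of "m D" "Mom L cs"] by auto
    then obtain D' where "prime D'" "D \<subseteq> D'" "w = m D'" using insub_m Mom.prems(2) by blast
    then show "\<exists>D'. prime D' \<and> D \<subseteq> D' \<and> tp D' = L \<and> (\<forall>c\<in>set cs. le_m (m D') c)"
      using w lab_m by auto
  qed
  show ?case using eq1 eq2 eq3 by blast
qed

lemma tp_S: assumes "prime G" shows "type_S (tp G) (tp (snx G))"
  unfolding type_S_def tp_def fst_conv snd_conv snx_def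
proof (intro conjI allI impI)
  fix a
  show "Nxt a \<in> SG \<inter> G \<Longrightarrow> a \<in> SG \<inter> {a. Nxt a \<in> G}" using cl_nxt by blast
  show "Nxt a \<in> SG - G \<Longrightarrow> a \<in> SG - {a. Nxt a \<in> G}" using cl_nxt by blast
  show "Dia a \<in> SG - G \<Longrightarrow> Dia a \<in> SG - {a. Nxt a \<in> G}" using dia_intro2[OF assms] by blast
  assume h: "Dia a \<in> SG \<inter> G \<and> a \<in> SG - G"
  then have "Or a (Nxt (Dia a)) \<in> G" using prime_ax[OF assms dia_unfold] by blast
  then show "Dia a \<in> SG \<inter> {a. Nxt a \<in> G}" using h prime_or[OF assms] by blast
qed

lemma tp_type: assumes "prime G" shows "is_type SG (tp G)"
  unfolding is_type_def tp_def Let_def fst_conv snd_conv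
proof (intro conjI allI impI)
  show "(SG - G) \<inter> (SG \<inter> G) = {}" by blast
  show "SG - G \<union> SG \<inter> G = SG" by blast
  show "Bot \<notin> SG \<inter> G" using prime_bot[OF assms] by blast
  fix a b
  show "And a b \<in> SG \<Longrightarrow> (And a b \<in> SG \<inter> G) = (a \<in> SG \<inter> G \<and> b \<in> SG \<inter> G)"
    using cl_and[of a b] prime_and[OF assms, of a b] by blast
  show "Or a b \<in> SG \<Longrightarrow> (Or a b \<in> SG \<inter> G) = (a \<in> SG \<inter> G \<or> b \<in> SG \<inter> G)"
    using cl_or[of a b] prime_or[OF assms, of a b] by blast
  show "Imp a b \<in> SG \<inter> G \<Longrightarrow> a \<in> SG - G \<or> b \<in> SG \<inter> G"
    using cl_imp[of a b] prime_mp[OF assms, of a b] by blast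
next
  fix a
  show "Dia a \<in> SG - G \<Longrightarrow> a \<in> SG - G" using cl_dia[of a] dia_intro[OF assms, of a] by blast
qed

lemma canon_S: "prime G \<Longrightarrow> prime D \<Longrightarrow> D \<subseteq> snx G \<Longrightarrow> tp D = tp (snx G) \<Longrightarrow> Sk K (m G) (m D)"
proof (induction "mu G" arbitrary: G D rule: less_induct)
  case less
  show ?case unfolding Sk_iff[of K "m G"]
  proof
    show "type_S (lab (m G)) (lab (m D))" using tp_S[OF less.prems(1)] less.prems(4) by (simp add: lab_m)
    show "\<forall>c\<in>set (ch (m G)). \<exists>d\<in>K. le_m (m D) d \<and> Sk K c d"
    proof
      fix c assume "c \<in> set (ch (m G))"
      then obtain G' where G': "G' \<in> ext G" "c = m G'" by (auto simp: ch_m)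
      have pG': "prime G'" "G \<subseteq> G'" using G' by (auto simp: ext_def)
      have sG': "prime (snx G')" "D \<subseteq> snx G'" using less.prems snx_prime pG' snx_mono by blast+
      have mu: "mu G' < mu G" using mu_ext G' by blast
      show "\<exists>d\<in>K. le_m (m D) d \<and> Sk K c d"
      proof (cases "tp (snx G') = tp D")
        case True
        then have "Sk K c (m D)" using less.hyps[OF mu pG'(1) less.prems(2) sG'(2)] G' by simp
        then show ?thesis using le_m_refl less.prems(2) by (auto simp: K_def)
      next
        case False
        have "Sk K c (m (snx G'))" using less.hyps[OF mu pG'(1) sG'(1)] G' by simp
        moreover have "le_m (m D) (m (snx G'))" using le_m_m sG' by blast
        ultimately show ?thesis using sG' by (auto simp: K_def)
      qed
    qed
  qed
qed

lemma canon_S': "prime G \<Longrightarrow> Sk K (m G) (m (snx G))"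
  using canon_S snx_prime by blast

definition SkK where "SkK a b \<longleftrightarrow> a \<in> K \<and> b \<in> K \<and> Sk K a b"

definition Good :: "fml \<Rightarrow> mom set" where
  "Good f = {a\<in>K. \<exists>n v. (SkK ^^ n) a v \<and> f \<in> snd (lab v)}"

lemma path_up: "(SkK ^^ n) a v \<Longrightarrow> le_m a a' \<Longrightarrow> a' \<in> K \<Longrightarrow> \<exists>v'. (SkK ^^ n) a' v' \<and> le_m v v' \<and> v' \<in> K"
proof (induction n arbitrary: a a')
  case 0 then show ?case by auto
next
  case (Suc n)
  then obtain a1 where a1: "SkK a a1" "(SkK ^^ n) a1 v" using relpowp_Suc_D2 by metis
  obtain b1 where b1: "b1 \<in> K" "le_m a1 b1" "Sk K a' b1" using Sk_confl[OF Suc.prems(2)] a1(1) by (auto simp: SkK_def)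
  obtain v' where "(SkK ^^ n) b1 v'" "le_m v v'" "v' \<in> K" using Suc.IH[OF a1(2) b1(2,1)] by blast
  moreover have "SkK a' b1" using b1 Suc.prems by (auto simp: SkK_def)
  ultimately show ?case by (meson relpowp_Suc_I2)
qed

lemma path_K: "(SkK ^^ n) a v \<Longrightarrow> a \<in> K \<Longrightarrow> v \<in> K"
proof (induction n arbitrary: a)
  case 0 then show ?case by simp
next
  case (Suc n)
  then obtain a1 where "SkK a a1" "(SkK ^^ n) a1 v" using relpowp_Suc_D2 by metis
  moreover have "a1 \<in> K" using \<open>SkK a a1\<close> unfolding SkK_def by blast
  ultimately show ?case using Suc.IH by blast
qed

lemma Good_up: "a \<in> Good f \<Longrightarrow> le_m a a' \<Longrightarrow> a' \<in> K \<Longrightarrow> a' \<in> Good f"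
proof -
  assume "a \<in> Good f" "le_m a a'" "a' \<in> K"
  then obtain n v where "(SkK ^^ n) a v" "f \<in> snd (lab v)" "a \<in> K" by (auto simp: Good_def)
  moreover have "v \<in> K" using \<open>(SkK ^^ n) a v\<close> \<open>a \<in> K\<close> by (rule path_K)
  ultimately show ?thesis using path_up \<open>le_m a a'\<close> \<open>a' \<in> K\<close> le_m_K_lab
    unfolding Good_def by blast
qed

end


context qm begin

lemma mK: "prime D \<Longrightarrow> m D \<in> K" unfolding K_def by blast

lemma omega: assumes aK: "a \<in> K" and dia: "Dia f \<in> snd (lab a)" shows "a \<in> Good f"
proof (rule ccontr)
  assume nG: "a \<notin> Good f"
  obtain G where G: "prime G" "a = m G" using aK unfolding K_def by blast
  define Bad where "Bad = K - Good f"
  have fB: "finite Bad" unfolding Bad_def using finite_K by simp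
  define psi where "psi = conj (map beta (lst Bad))"
  have F1: "psi \<in> D \<longleftrightarrow> m D \<in> Good f" if D: "prime D" for D
  proof
    assume "psi \<in> D"
    then have all: "\<forall>b\<in>Bad. beta b \<in> D" unfolding psi_def using prime_conj[OF D] set_lst[OF fB] by auto
    show "m D \<in> Good f"
    proof (rule ccontr)
      assume "m D \<notin> Good f"
      then have "m D \<in> Bad" unfolding Bad_def using mK[OF D] by blast
      then have "beta (m D) \<in> D" using all by blast
      moreover have "le_m (m D) (m D)" by (rule le_m_refl)
      ultimately show False using truth[OF mK[OF D] D] by blast
    qed
  next
    assume g: "m D \<in> Good f"
    have "\<forall>b\<in>Bad. beta b \<in> D"
    proof
      fix b assume b: "b \<in> Bad"
      then have bK: "b \<in> K" "b \<notin> Good f" unfolding Bad_def by auto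
      show "beta b \<in> D"
      proof (rule ccontr)
        assume "beta b \<notin> D"
        then have "le_m (m D) b" using truth[OF bK(1) D] by blast
        then show False using Good_up[OF g _ bK(1)] bK(2) by blast
      qed
    qed
    then show "psi \<in> D" unfolding psi_def using prime_conj[OF D] set_lst[OF fB] by auto
  qed
  have "Dia f \<in> SG" "Dia f \<in> G" using dia G lab_m unfolding tp_def by auto
  then have fS: "f \<in> SG" using cl_dia by blast
  have F2: "ITL0 (Imp f psi)"
  proof (rule thm_complete_imp)
    fix D assume D: "prime D" "f \<in> D"
    have "(SkK ^^ 0) (m D) (m D)" by simp
    moreover have "f \<in> snd (lab (m D))" using D fS lab_m unfolding tp_def by simp
    ultimately have "m D \<in> Good f" unfolding Good_def using mK[OF D(1)] by blast
    then show "psi \<in> D" using F1[OF D(1)] by blast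
  qed
  have F3: "ITL0 (Imp (Nxt psi) psi)"
  proof (rule thm_complete_imp)
    fix D assume D: "prime D" "Nxt psi \<in> D"
    have sD: "prime (snx D)" "psi \<in> snx D" using snx_prime[OF D(1)] D(2) unfolding snx_def by auto
    then have "m (snx D) \<in> Good f" using F1 by blast
    then obtain n v where nv: "(SkK ^^ n) (m (snx D)) v" "f \<in> snd (lab v)" unfolding Good_def by blast
    have "SkK (m D) (m (snx D))" unfolding SkK_def using canon_S'[OF D(1)] mK D(1) sD(1) by blast
    then have "(SkK ^^ Suc n) (m D) v" using nv(1) by (rule relpowp_Suc_I2)
    then have "m D \<in> Good f" unfolding Good_def using nv(2) mK[OF D(1)] by blast
    then show "psi \<in> D" using F1[OF D(1)] by blast
  qed
  have "Dia psi \<in> G" using prime_ax[OF G(1) dia_mono[OF F2]] \<open>Dia f \<in> G\<close> by blast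
  then have "psi \<in> G" using prime_ax[OF G(1) dia_ind[OF F3]] by blast
  then have "a \<in> Good f" using F1[OF G(1)] G(2) by simp
  then show False using nG by blast
qed

definition cls :: "mom \<Rightarrow> mom set" where "cls a = {x\<in>K. le_m a x \<and> le_m x a}"
definition rep :: "mom \<Rightarrow> mom" where "rep a = (SOME x. x \<in> cls a)"
definition W' :: "mom set" where "W' = rep ` K"
definition le' :: "mom \<Rightarrow> mom \<Rightarrow> bool" where "le' x y \<longleftrightarrow> x \<in> W' \<and> y \<in> W' \<and> le_m x y"
definition S' :: "mom \<Rightarrow> mom \<Rightarrow> bool" where
  "S' x y \<longleftrightarrow> x \<in> W' \<and> y \<in> W' \<and> (\<exists>y0\<in>K. Sk K x y0 \<and> rep y0 = y)"

lemma rep_cls: "a \<in> K \<Longrightarrow> rep a \<in> cls a"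
  unfolding rep_def by (rule someI[of _ a]) (simp add: cls_def le_m_refl)

lemma rep_props: "a \<in> K \<Longrightarrow> rep a \<in> K \<and> le_m a (rep a) \<and> le_m (rep a) a"
  using rep_cls unfolding cls_def by blast

lemma rep_eq: "a \<in> K \<Longrightarrow> b \<in> K \<Longrightarrow> le_m a b \<Longrightarrow> le_m b a \<Longrightarrow> rep a = rep b"
proof -
  assume h: "a \<in> K" "b \<in> K" "le_m a b" "le_m b a"
  have "cls a = cls b"
  proof (rule set_eqI)
    fix x
    have e1: "le_m a x \<longleftrightarrow> le_m b x" using h(3,4) le_m_trans[of b a x] le_m_trans[of a b x] by blast
    have e2: "le_m x a \<longleftrightarrow> le_m x b" using h(3,4) le_m_trans[of x a b] le_m_trans[of x b a] by blast
    show "x \<in> cls a \<longleftrightarrow> x \<in> cls b" unfolding cls_def mem_Collect_eq e1 e2 ..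
  qed
  then show ?thesis unfolding rep_def by simp
qed

lemma W'_K: "x \<in> W' \<Longrightarrow> x \<in> K" unfolding W'_def using rep_props by blast

lemma rep_W: "x \<in> W' \<Longrightarrow> rep x = x"
proof -
  assume "x \<in> W'"
  then obtain a where a: "a \<in> K" "x = rep a" unfolding W'_def by blast
  then have "rep (rep a) = rep a" using rep_props[OF a(1)] rep_eq[of "rep a" a] by blast
  then show ?thesis using a by simp
qed

lemma lab_rep: "a \<in> K \<Longrightarrow> lab (rep a) = lab a"
  using rep_props lab_K_eq le_m_K_lab by (metis subset_antisym)

lemma finite_W': "finite W'" unfolding W'_def using finite_K by simp

lemma path_W: "(SkK ^^ n) a v \<Longrightarrow> x \<in> W' \<Longrightarrow> le_m a x \<Longrightarrow> \<exists>v'. (S' ^^ n) x v' \<and> le_m v v'"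
proof (induction n arbitrary: a x)
  case 0 then show ?case by auto
next
  case (Suc n)
  then obtain a1 where a1: "SkK a a1" "(SkK ^^ n) a1 v" using relpowp_Suc_D2 by metis
  have xK: "x \<in> K" using W'_K Suc.prems by blast
  obtain b1 where b1: "b1 \<in> K" "le_m a1 b1" "Sk K x b1"
    using Sk_confl[OF Suc.prems(3)] a1(1) unfolding SkK_def by blast
  have r: "rep b1 \<in> W'" "le_m b1 (rep b1)" using b1(1) rep_props unfolding W'_def by auto
  have "S' x (rep b1)" unfolding S'_def using Suc.prems(2) r(1) b1 by blast
  moreover have "le_m a1 (rep b1)" using le_m_trans[OF b1(2) r(2)] .
  then obtain v' where "(S' ^^ n) (rep b1) v'" "le_m v v'" using Suc.IH[OF a1(2) r(1)] by blast
  ultimately show ?case by (meson relpowp_Suc_I2)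
qed

lemma path_S'_W: "(S' ^^ n) x v \<Longrightarrow> x \<in> W' \<Longrightarrow> v \<in> W'"
proof (induction n arbitrary: x)
  case 0 then show ?case by simp
next
  case (Suc n)
  then obtain a1 where "S' x a1" "(S' ^^ n) a1 v" using relpowp_Suc_D2 by metis
  then show ?case using Suc.IH unfolding S'_def by blast
qed

lemma q0: "\<forall>w v. le' w v \<longrightarrow> w \<in> W' \<and> v \<in> W'" unfolding le'_def by blast

lemma q1: "\<forall>w\<in>W'. le' w w" unfolding le'_def using le_m_refl by simp

lemma q2: "\<forall>u\<in>W'. \<forall>v\<in>W'. \<forall>w\<in>W'. le' u v \<and> le' v w \<longrightarrow> le' u w"
proof (intro ballI impI)
  fix u v w assume "u \<in> W'" "v \<in> W'" "w \<in> W'" "le' u v \<and> le' v w"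
  then show "le' u w" unfolding le'_def using le_m_trans[of u v w] by simp
qed

lemma q3: "\<forall>u\<in>W'. \<forall>v\<in>W'. le' u v \<and> le' v u \<longrightarrow> u = v"
proof (intro ballI impI)
  fix u v assume uv: "u \<in> W'" "v \<in> W'" "le' u v \<and> le' v u"
  then have "rep u = rep v" using rep_eq[of u v] W'_K[of u] W'_K[of v] unfolding le'_def by simp
  then show "u = v" using rep_W[OF uv(1)] rep_W[OF uv(2)] by simp
qed

lemma q4: "\<forall>w\<in>W'. is_type SG (lab w)"
proof
  fix w assume "w \<in> W'"
  then obtain D where "prime D" "w = m D" using W'_K unfolding K_def by blast
  then show "is_type SG (lab w)" using tp_type lab_m by simp
qed

lemma q5: "\<forall>w v. le' w v \<longrightarrow> type_le (lab w) (lab v)"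
proof (intro allI impI)
  fix w v assume "le' w v"
  then show "type_le (lab w) (lab v)" unfolding le'_def type_le_def using le_m_K_lab[of w v] W'_K[of w] by simp
qed

lemma q6: "\<forall>w\<in>W'. \<forall>a b. Imp a b \<in> fst (lab w) \<longrightarrow> (\<exists>v. le' w v \<and> a \<in> snd (lab v) \<and> b \<in> fst (lab v))"
proof (intro ballI allI impI)
  fix w a b assume w: "w \<in> W'" and ab: "Imp a b \<in> fst (lab w)"
  obtain D where D: "prime D" "w = m D" using w W'_K unfolding K_def by blast
  have "Imp a b \<in> SG" "Imp a b \<notin> D" using ab D lab_m unfolding tp_def by auto
  then have abS: "a \<in> SG" "b \<in> SG" using cl_imp[of a b] by simp_all
  obtain D' where D': "prime D'" "D \<subseteq> D'" "a \<in> D'" "b \<notin> D'" using prime_imp_ext[OF D(1) \<open>Imp a b \<notin> D\<close>] by blast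
  let ?v = "rep (m D')"
  have vK1: "?v \<in> W'" unfolding W'_def using mK[OF D'(1)] by (rule imageI)
  have vK2: "le_m (m D') ?v" using rep_props[OF mK[OF D'(1)]] by blast
  have vK3: "lab ?v = tp D'" using lab_rep[OF mK[OF D'(1)]] lab_m[of D'] by simp
  have "le_m w ?v" using le_m_trans[OF le_m_m[OF D'(1,2)] vK2] D(2) by simp
  then have "le' w ?v" unfolding le'_def using w vK1 by blast
  moreover have "a \<in> snd (lab ?v)" "b \<in> fst (lab ?v)" using vK3 D' abS unfolding tp_def by auto
  ultimately show "\<exists>v. le' w v \<and> a \<in> snd (lab v) \<and> b \<in> fst (lab v)" by blast
qed
lemma q7: "\<forall>w v. S' w v \<longrightarrow> w \<in> W' \<and> v \<in> W'" unfolding S'_def by blast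

lemma q8: "\<forall>w\<in>W'. \<exists>v. S' w v"
proof
  fix w assume w: "w \<in> W'"
  obtain D where D: "prime D" "w = m D" using w W'_K unfolding K_def by blast
  have sK: "m (snx D) \<in> K" using mK snx_prime D(1) by blast
  have "Sk K w (m (snx D))" using canon_S'[OF D(1)] D(2) by simp
  moreover have "rep (m (snx D)) \<in> W'" unfolding W'_def using sK by blast
  ultimately have "S' w (rep (m (snx D)))" unfolding S'_def using w sK by blast
  then show "\<exists>v. S' w v" by blast
qed

lemma q9: "\<forall>w w' v. le' w w' \<and> S' w v \<longrightarrow> (\<exists>v'. le' v v' \<and> S' w' v')"
proof (intro allI impI)
  fix w w' v assume h: "le' w w' \<and> S' w v"
  then obtain y0 where y0: "y0 \<in> K" "Sk K w y0" "rep y0 = v" unfolding S'_def by blast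
  have ww: "le_m w w'" "w' \<in> W'" "v \<in> W'" using h unfolding le'_def S'_def by auto
  obtain b1 where b1: "b1 \<in> K" "le_m y0 b1" "Sk K w' b1" using Sk_confl[OF ww(1) y0(2) y0(1)] by blast
  have r: "rep b1 \<in> W'" "le_m b1 (rep b1)" using rep_props[OF b1(1)] unfolding W'_def using b1(1) by auto
  have "le_m v y0" using rep_props[OF y0(1)] y0(3) by blast
  then have "le_m v (rep b1)" by (rule le_m_trans[OF le_m_trans[OF _ b1(2)] r(2)])
  then have "le' v (rep b1)" unfolding le'_def using ww(3) r(1) by blast
  moreover have "S' w' (rep b1)" unfolding S'_def using ww(2) r(1) b1 by blast
  ultimately show "\<exists>v'. le' v v' \<and> S' w' v'" by blast
qed

lemma q10: "\<forall>w v. S' w v \<longrightarrow> type_S (lab w) (lab v)"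
proof (intro allI impI)
  fix w v assume "S' w v"
  then obtain y0 where y0: "y0 \<in> K" "Sk K w y0" "rep y0 = v" unfolding S'_def by blast
  then have "type_S (lab w) (lab y0)" using Sk_iff[of K w y0] by blast
  then show "type_S (lab w) (lab v)" using lab_rep[OF y0(1)] y0(3) by simp
qed

lemma q11: "\<forall>w\<in>W'. \<forall>f. Dia f \<in> snd (lab w) \<longrightarrow> (\<exists>n v. (S' ^^ n) w v \<and> f \<in> snd (lab v))"
proof (intro ballI allI impI)
  fix w f assume w: "w \<in> W'" and d: "Dia f \<in> snd (lab w)"
  have wK: "w \<in> K" using W'_K[OF w] .
  have "w \<in> Good f" using omega[OF wK d] .
  then obtain n v where nv: "(SkK ^^ n) w v" "f \<in> snd (lab v)" unfolding Good_def by blast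
  obtain v' where v': "(S' ^^ n) w v'" "le_m v v'" using path_W[OF nv(1) w le_m_refl] by blast
  have "v \<in> K" using path_K[OF nv(1) wK] .
  then have "snd (lab v) \<subseteq> snd (lab v')" using le_m_K_lab v'(2) by simp
  then have "f \<in> snd (lab v')" using nv(2) by (rule subsetD)
  then show "\<exists>n v. (S' ^^ n) w v \<and> f \<in> snd (lab v)" using v'(1) by blast
qed

lemma qm_W': "quasimodel SG W' le' S' lab"
  unfolding quasimodel_def by (intro conjI q0 q1 q2 q3 q4 q5 q6 q7 q8 q9 q10 q11)

lemma falsify: assumes "\<not> ITL0 phi" "phi \<in> SG"
  shows "\<exists>w\<in>W'. phi \<in> fst (lab w)"
proof -
  obtain G where G: "prime G" "phi \<notin> G" using lindenbaum[of "{}" phi] nd_empty assms(1) by blast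
  have "rep (m G) \<in> W'" unfolding W'_def using mK[OF G(1)] by blast
  moreover have "lab (rep (m G)) = tp G" using lab_rep[OF mK[OF G(1)]] lab_m by simp
  ultimately show ?thesis using G assms(2) unfolding tp_def by force
qed

end


lemma transport:
  fixes f :: "'w \<Rightarrow> nat" and Wv :: "'w set" and le S :: "'w \<Rightarrow> 'w \<Rightarrow> bool" and lab :: "'w \<Rightarrow> fml set \<times> fml set"
  assumes q: "quasimodel Sg Wv le S lab" and inj: "inj_on f Wv"
  defines "g \<equiv> inv_into Wv f"
  shows "quasimodel Sg (f ` Wv) (\<lambda>x y. x \<in> f ` Wv \<and> y \<in> f ` Wv \<and> le (g x) (g y))
           (\<lambda>x y. x \<in> f ` Wv \<and> y \<in> f ` Wv \<and> S (g x) (g y)) (\<lambda>x. lab (g x))"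
proof -
  have gf: "w \<in> Wv \<Longrightarrow> g (f w) = w" for w unfolding g_def using inj by (rule inv_into_f_f)
  have gW: "x \<in> f ` Wv \<Longrightarrow> g x \<in> Wv" for x unfolding g_def by (rule inv_into_into)
  have fg: "x \<in> f ` Wv \<Longrightarrow> f (g x) = x" for x unfolding g_def by (rule f_inv_into_f)
  note qd = q[unfolded quasimodel_def]
  note c0 = qd[THEN conjunct1]
  note c1 = qd[THEN conjunct2, THEN conjunct1]
  note c2 = qd[THEN conjunct2, THEN conjunct2, THEN conjunct1]
  note c3 = qd[THEN conjunct2, THEN conjunct2, THEN conjunct2, THEN conjunct1]
  note c4 = qd[THEN conjunct2, THEN conjunct2, THEN conjunct2, THEN conjunct2, THEN conjunct1]
  note c5 = qd[THEN conjunct2, THEN conjunct2, THEN conjunct2, THEN conjunct2, THEN conjunct2, THEN conjunct1]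
  note c6 = qd[THEN conjunct2, THEN conjunct2, THEN conjunct2, THEN conjunct2, THEN conjunct2, THEN conjunct2, THEN conjunct1]
  note c7 = qd[THEN conjunct2, THEN conjunct2, THEN conjunct2, THEN conjunct2, THEN conjunct2, THEN conjunct2, THEN conjunct2, THEN conjunct1]
  note c8 = qd[THEN conjunct2, THEN conjunct2, THEN conjunct2, THEN conjunct2, THEN conjunct2, THEN conjunct2, THEN conjunct2, THEN conjunct2, THEN conjunct1]
  note c9 = qd[THEN conjunct2, THEN conjunct2, THEN conjunct2, THEN conjunct2, THEN conjunct2, THEN conjunct2, THEN conjunct2, THEN conjunct2, THEN conjunct2, THEN conjunct1]
  note c10 = qd[THEN conjunct2, THEN conjunct2, THEN conjunct2, THEN conjunct2, THEN conjunct2, THEN conjunct2, THEN conjunct2, THEN conjunct2, THEN conjunct2, THEN conjunct2, THEN conjunct1]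
  note c11 = qd[THEN conjunct2, THEN conjunct2, THEN conjunct2, THEN conjunct2, THEN conjunct2, THEN conjunct2, THEN conjunct2, THEN conjunct2, THEN conjunct2, THEN conjunct2, THEN conjunct2]
  have leW: "le w v \<Longrightarrow> w \<in> Wv \<and> v \<in> Wv" for w v using c0 by blast
  have SW: "S w v \<Longrightarrow> w \<in> Wv \<and> v \<in> Wv" for w v using c7 by blast
  let ?le = "\<lambda>x y. x \<in> f ` Wv \<and> y \<in> f ` Wv \<and> le (g x) (g y)"
  let ?S = "\<lambda>x y. x \<in> f ` Wv \<and> y \<in> f ` Wv \<and> S (g x) (g y)"
  have pow: "(S ^^ n) a v \<Longrightarrow> a \<in> Wv \<Longrightarrow> (?S ^^ n) (f a) (f v)" for n a v
  proof (induction n arbitrary: a)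
    case 0 then show ?case by simp
  next
    case (Suc n)
    then obtain a1 where a1: "S a a1" "(S ^^ n) a1 v" using relpowp_Suc_D2 by metis
    have Wv: "a \<in> Wv" "a1 \<in> Wv" using SW[OF a1(1)] by auto
    have "?S (f a) (f a1)" using a1(1) Wv gf by auto
    moreover have "(?S ^^ n) (f a1) (f v)" using Suc.IH[OF a1(2) Wv(2)] .
    ultimately show ?case by (rule relpowp_Suc_I2)
  qed
  show ?thesis unfolding quasimodel_def
  proof (intro conjI)
    show "\<forall>w v. ?le w v \<longrightarrow> w \<in> f ` Wv \<and> v \<in> f ` Wv" by blast
    show "\<forall>w\<in>f ` Wv. ?le w w" using c1 gW by blast
    show "\<forall>u\<in>f ` Wv. \<forall>v\<in>f ` Wv. \<forall>w\<in>f ` Wv. ?le u v \<and> ?le v w \<longrightarrow> ?le u w"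
    proof (intro ballI impI)
      fix u v w assume "u \<in> f ` Wv" "v \<in> f ` Wv" "w \<in> f ` Wv" "?le u v \<and> ?le v w"
      then show "?le u w" using c2 gW[of u] gW[of v] gW[of w] by blast
    qed
    show "\<forall>u\<in>f ` Wv. \<forall>v\<in>f ` Wv. ?le u v \<and> ?le v u \<longrightarrow> u = v"
    proof (intro ballI impI)
      fix u v assume uv: "u \<in> f ` Wv" "v \<in> f ` Wv" "?le u v \<and> ?le v u"
      then have "g u = g v" using c3 gW[of u] gW[of v] by blast
      then show "u = v" using fg[OF uv(1)] fg[OF uv(2)] by metis
    qed
    show "\<forall>w\<in>f ` Wv. is_type Sg (lab (g w))" using c4 gW by blast
    show "\<forall>w v. ?le w v \<longrightarrow> type_le (lab (g w)) (lab (g v))" using c5 by blast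
    show "\<forall>w\<in>f ` Wv. \<forall>a b. Imp a b \<in> fst (lab (g w)) \<longrightarrow> (\<exists>v. ?le w v \<and> a \<in> snd (lab (g v)) \<and> b \<in> fst (lab (g v)))"
    proof (intro ballI allI impI)
      fix w a b assume w: "w \<in> f ` Wv" and ab: "Imp a b \<in> fst (lab (g w))"
      then obtain v where v: "le (g w) v" "a \<in> snd (lab v)" "b \<in> fst (lab v)" using c6 ab gW[OF w] by blast
      then have vW: "v \<in> Wv" using leW by blast
      then have "?le w (f v)" using w v(1) gf[OF vW] by auto
      then show "\<exists>v. ?le w v \<and> a \<in> snd (lab (g v)) \<and> b \<in> fst (lab (g v))" using v gf[OF vW] by auto
    qed
    show "\<forall>w v. ?S w v \<longrightarrow> w \<in> f ` Wv \<and> v \<in> f ` Wv" by blast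
    show "\<forall>w\<in>f ` Wv. \<exists>v. ?S w v"
    proof
      fix w assume w: "w \<in> f ` Wv"
      then obtain v where v: "S (g w) v" using c8 gW[OF w] by blast
      then have vW: "v \<in> Wv" using SW by blast
      then have "?S w (f v)" using w v gf[OF vW] by auto
      then show "\<exists>v. ?S w v" by blast
    qed
    show "\<forall>w w' v. ?le w w' \<and> ?S w v \<longrightarrow> (\<exists>v'. ?le v v' \<and> ?S w' v')"
    proof (intro allI impI)
      fix w w' v assume h: "?le w w' \<and> ?S w v"
      then obtain v' where v': "le (g v) v'" "S (g w') v'" using c9 h by blast
      then have vW: "v' \<in> Wv" using leW by blast
      have "?le v (f v')" using h v'(1) gf[OF vW] vW by auto
      moreover have "?S w' (f v')" using h v'(2) gf[OF vW] vW by auto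
      ultimately show "\<exists>v'. ?le v v' \<and> ?S w' v'" by blast
    qed
    show "\<forall>w v. ?S w v \<longrightarrow> type_S (lab (g w)) (lab (g v))" using c10 by blast
    show "\<forall>w\<in>f ` Wv. \<forall>a. Dia a \<in> snd (lab (g w)) \<longrightarrow> (\<exists>n v. (?S ^^ n) w v \<and> a \<in> snd (lab (g v)))"
    proof (intro ballI allI impI)
      fix w a assume w: "w \<in> f ` Wv" and d: "Dia a \<in> snd (lab (g w))"
      then obtain n v where nv: "(S ^^ n) (g w) v" "a \<in> snd (lab v)" using c11 d gW[OF w] by blast
      have p: "(?S ^^ n) (f (g w)) (f v)" using pow[OF nv(1) gW[OF w]] .
      have vW: "v \<in> Wv"
      proof (cases n)
        case 0 then show ?thesis using nv(1) gW[OF w] by simp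
      next
        case (Suc k)
        then obtain y where "(S ^^ k) (g w) y" "S y v" using nv(1) relpowp_Suc_E by metis
        then show ?thesis using SW by blast
      qed
      have "(?S ^^ n) w (f v)" using p fg[OF w] by simp
      moreover have "a \<in> snd (lab (g (f v)))" using gf[OF vW] nv(2) by simp
      ultimately show "\<exists>n v. (?S ^^ n) w v \<and> a \<in> snd (lab (g v))" by blast
    qed
  qed
qed

lemma sub_qm: "qm (sub phi)"
proof
  show "finite (sub phi)" by (rule finite_sub)
  fix a b
  show "And a b \<in> sub phi \<Longrightarrow> a \<in> sub phi \<and> b \<in> sub phi" using sub_trans sub_refl by fastforce
  show "Or a b \<in> sub phi \<Longrightarrow> a \<in> sub phi \<and> b \<in> sub phi" using sub_trans sub_refl by fastforce
  show "Imp a b \<in> sub phi \<Longrightarrow> a \<in> sub phi \<and> b \<in> sub phi" using sub_trans sub_refl by fastforce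
  show "Nxt a \<in> sub phi \<Longrightarrow> a \<in> sub phi" using sub_trans sub_refl by fastforce
  show "Dia a \<in> sub phi \<Longrightarrow> a \<in> sub phi" using sub_trans sub_refl by fastforce
qed

theorem theorem7p5:
  fixes \<phi> :: fml
  assumes "\<not> ITL0 \<phi>"
  shows "\<exists>(W :: nat set) le S lab w.
           finite W \<and> quasimodel (sub \<phi>) W le S lab \<and> w \<in> W \<and> \<phi> \<in> fst (lab w)"
proof -
  interpret I: qm "sub \<phi>" by (rule sub_qm)
  have q: "quasimodel (sub \<phi>) I.W' I.le' I.S' lab" by (rule I.qm_W')
  have fin: "finite I.W'" by (rule I.finite_W')
  obtain w where w: "w \<in> I.W'" "\<phi> \<in> fst (lab w)" using I.falsify[OF assms sub_refl] by blast
  obtain f :: "mom \<Rightarrow> nat" and n where f: "f ` I.W' = {i. i < n}" "inj_on f I.W'"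
    using finite_imp_inj_to_nat_seg[OF fin] by blast
  let ?g = "inv_into I.W' f"
  have q2: "quasimodel (sub \<phi>) (f ` I.W') (\<lambda>x y. x \<in> f ` I.W' \<and> y \<in> f ` I.W' \<and> I.le' (?g x) (?g y))
           (\<lambda>x y. x \<in> f ` I.W' \<and> y \<in> f ` I.W' \<and> I.S' (?g x) (?g y)) (\<lambda>x. lab (?g x))"
    using transport[OF q f(2)] by simp
  have "?g (f w) = w" using inv_into_f_f[OF f(2) w(1)] .
  then have "\<phi> \<in> fst (lab (?g (f w)))" using w(2) by simp
  moreover have "finite (f ` I.W')" using fin by simp
  moreover have "f w \<in> f ` I.W'" using w(1) by simp
  ultimately show ?thesis using q2 by blast
qed


end
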